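(* Let $k\ge 1$ and let $H$ be a connected $k$-regular $k$-edge-colorable graph with no loops or semi-edges (multiple ordinary edges allowed). Let $G$ be a connected simple $k$-regular graph and $u\in V(G)$ a vertex such that for every $x\in V(H)$ and every bijection $E_G(u)\to E_H(x)$ there is a covering projection from $G$ to $H$ mapping $u$ to $x$ and extending that bijection. Let $G_u$ be obtained from $G$ by splitting $u$ into $k$ pendant vertices: each edge $e\in E_G(u)$ is kept, but its end-vertex $u$ is replaced by a new vertex $u_e$ of degree 1. Then: (a) for every $x\in V(H)$ and every bijection $\sigma_x:E_G(u)\to E_H(x)$ there is a partial covering projection from $G_u$ onto $H$ that extends $\sigma_x$ and maps every $u_e$, $e\in E_G(u)$, to $x$; (b) in every partial covering projection from $G_u$ onto $H$, all the pendant vertices $u_e$, $e\in E_G(u)$, are mapped to the same vertex of $H$; (c) in every partial covering projection from $G_u$ onto $H$, the $k$ pendant edges are mapped to pairwise distinct edges of $H$ (incident with the common image of the pendant vertices).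
   Context: $E_G(u)$ denotes the set of edges of $G$ incident with $u$. A covering projection between graphs without loops and semi-edges is a map sending vertices to vertices and edges to edges, preserving incidences, such that for every edge $xy$ of the target its preimage is a perfect matching between the preimages of $x$ and $y$. A partial covering projection from $G'$ onto $H$ is a map $f:V(G')\cup E(G')\to V(H)\cup E(H)$ that is surjective on vertices and on edges, sends vertices to vertices and edges to edges, preserves incidences, and such that for every edge $xy$ of $H$ its preimage is a matching (not necessarily perfect) each of whose edges joins a vertex of $f^{-1}(x)$ to a vertex of $f^{-1}(y)$. *)

theory Defs
  imports Main
begin

text \<open>Parallel edges are allowed (ends need not be injective).\<close>

definition multigraph :: "'v set \<Rightarrow> 'e set \<Rightarrow> ('e \<Rightarrow> 'v set) \<Rightarrow> bool" where
  "multigraph V E ends \<longleftrightarrow> finite V \<and> finite E \<and>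
     (\<forall>e\<in>E. ends e \<subseteq> V \<and> card (ends e) = 2)"

definition simple_graph :: "'v set \<Rightarrow> 'e set \<Rightarrow> ('e \<Rightarrow> 'v set) \<Rightarrow> bool" where
  "simple_graph V E ends \<longleftrightarrow> multigraph V E ends \<and> inj_on ends E"

definition inc_edges :: "'e set \<Rightarrow> ('e \<Rightarrow> 'v set) \<Rightarrow> 'v \<Rightarrow> 'e set" where
  "inc_edges E ends u = {e\<in>E. u \<in> ends e}"

definition regular :: "nat \<Rightarrow> 'v set \<Rightarrow> 'e set \<Rightarrow> ('e \<Rightarrow> 'v set) \<Rightarrow> bool" where
  "regular k V E ends \<longleftrightarrow> (\<forall>v\<in>V. card (inc_edges E ends v) = k)"

definition adj_rel :: "'e set \<Rightarrow> ('e \<Rightarrow> 'v set) \<Rightarrow> ('v \<times> 'v) set" where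
  "adj_rel E ends = {(x, y). \<exists>e\<in>E. ends e = {x, y}}"

definition connected_graph :: "'v set \<Rightarrow> 'e set \<Rightarrow> ('e \<Rightarrow> 'v set) \<Rightarrow> bool" where
  "connected_graph V E ends \<longleftrightarrow> (\<forall>x\<in>V. \<forall>y\<in>V. (x, y) \<in> (adj_rel E ends)\<^sup>*)"

definition edge_colorable :: "nat \<Rightarrow> 'e set \<Rightarrow> ('e \<Rightarrow> 'v set) \<Rightarrow> bool" where
  "edge_colorable k E ends \<longleftrightarrow> (\<exists>c :: 'e \<Rightarrow> nat. (\<forall>e\<in>E. c e < k) \<and>
     (\<forall>e1\<in>E. \<forall>e2\<in>E. e1 \<noteq> e2 \<and> ends e1 \<inter> ends e2 \<noteq> {} \<longrightarrow> c e1 \<noteq> c e2))"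

definition is_matching :: "('e \<Rightarrow> 'v set) \<Rightarrow> 'e set \<Rightarrow> bool" where
  "is_matching ends M \<longleftrightarrow> (\<forall>e1\<in>M. \<forall>e2\<in>M. e1 \<noteq> e2 \<longrightarrow> ends e1 \<inter> ends e2 = {})"

definition graph_hom ::
  "'v set \<Rightarrow> 'e set \<Rightarrow> ('e \<Rightarrow> 'v set) \<Rightarrow> 'w set \<Rightarrow> 'f set \<Rightarrow> ('f \<Rightarrow> 'w set)
   \<Rightarrow> ('v \<Rightarrow> 'w) \<Rightarrow> ('e \<Rightarrow> 'f) \<Rightarrow> bool" where
  "graph_hom VG EG endsG VH EH endsH fV fE \<longleftrightarrow>
     (\<forall>v\<in>VG. fV v \<in> VH) \<and> (\<forall>e\<in>EG. fE e \<in> EH) \<and>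
     (\<forall>e\<in>EG. endsH (fE e) = fV ` endsG e)"

definition covering_projection ::
  "'v set \<Rightarrow> 'e set \<Rightarrow> ('e \<Rightarrow> 'v set) \<Rightarrow> 'w set \<Rightarrow> 'f set \<Rightarrow> ('f \<Rightarrow> 'w set)
   \<Rightarrow> ('v \<Rightarrow> 'w) \<Rightarrow> ('e \<Rightarrow> 'f) \<Rightarrow> bool" where
  "covering_projection VG EG endsG VH EH endsH fV fE \<longleftrightarrow>
     graph_hom VG EG endsG VH EH endsH fV fE \<and>
     (\<forall>h\<in>EH. is_matching endsG {e\<in>EG. fE e = h} \<and>
        (\<forall>v\<in>VG. fV v \<in> endsH h \<longrightarrow> (\<exists>e\<in>EG. fE e = h \<and> v \<in> endsG e)))"

definition partial_covering_projection ::
  "'v set \<Rightarrow> 'e set \<Rightarrow> ('e \<Rightarrow> 'v set) \<Rightarrow> 'w set \<Rightarrow> 'f set \<Rightarrow> ('f \<Rightarrow> 'w set)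
   \<Rightarrow> ('v \<Rightarrow> 'w) \<Rightarrow> ('e \<Rightarrow> 'f) \<Rightarrow> bool" where
  "partial_covering_projection VG EG endsG VH EH endsH fV fE \<longleftrightarrow>
     graph_hom VG EG endsG VH EH endsH fV fE \<and>
     fV ` VG = VH \<and> fE ` EG = EH \<and>
     (\<forall>h\<in>EH. is_matching endsG {e\<in>EG. fE e = h})"

text \<open>G_u: split u into pendant vertices u_e (represented as Inr e); the other vertices are Inl v.
The edge set is unchanged.\<close>
definition split_V :: "'v set \<Rightarrow> 'e set \<Rightarrow> ('e \<Rightarrow> 'v set) \<Rightarrow> 'v \<Rightarrow> ('v + 'e) set" where
  "split_V V E ends u = Inl ` (V - {u}) \<union> Inr ` inc_edges E ends u"

definition split_ends :: "('e \<Rightarrow> 'v set) \<Rightarrow> 'v \<Rightarrow> 'e \<Rightarrow> ('v + 'e) set" where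
  "split_ends ends u e = (\<lambda>w. if w = u then Inr e else Inl w) ` ends e"

end

theory Submission
  imports Defs
begin


lemma match_inj:
  assumes "\<forall>h\<in>EH. is_matching ends' {e\<in>E'. fE e = h}" "\<forall>e\<in>E'. fE e \<in> EH"
    "e1\<in>E'" "e2\<in>E'" "z\<in>ends' e1" "z\<in>ends' e2" "fE e1 = fE e2"
  shows "e1 = e2"
  using assms unfolding is_matching_def by blast

lemma loc_bij:
  assumes hom: "graph_hom V' E' ends' VH EH endsH fV fE"
    and mat: "\<forall>h\<in>EH. is_matching ends' {e\<in>E'. fE e = h}"
    and mg: "multigraph VH EH endsH" and reg: "regular k VH EH endsH"
    and z: "z \<in> V'" and cz: "card (inc_edges E' ends' z) = k" and fin: "finite E'"
  shows "bij_betw fE (inc_edges E' ends' z) (inc_edges EH endsH (fV z))"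
proof -
  have fE: "\<forall>e\<in>E'. fE e \<in> EH" and fVz: "fV z \<in> VH" and ee: "\<forall>e\<in>E'. endsH (fE e) = fV ` ends' e"
    using hom z unfolding graph_hom_def by auto
  have inj: "inj_on fE (inc_edges E' ends' z)"
    unfolding inj_on_def inc_edges_def using match_inj[OF mat fE] by blast
  have sub: "fE ` inc_edges E' ends' z \<subseteq> inc_edges EH endsH (fV z)"
    unfolding inc_edges_def using fE ee by auto
  have fin2: "finite (inc_edges EH endsH (fV z))"
    using mg unfolding multigraph_def inc_edges_def by auto
  have "card (fE ` inc_edges E' ends' z) = k" using card_image[OF inj] cz by simp
  moreover have "card (inc_edges EH endsH (fV z)) = k" using reg fVz unfolding regular_def by auto
  ultimately have "fE ` inc_edges E' ends' z = inc_edges EH endsH (fV z)"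
    using card_subset_eq[OF fin2 sub] by simp
  then show ?thesis using inj unfolding bij_betw_def by simp
qed

lemma colour_at:
  assumes mg: "multigraph VH EH endsH" and reg: "regular k VH EH endsH"
    and c1: "\<forall>e\<in>EH. c e < k"
    and c2: "\<forall>e1\<in>EH. \<forall>e2\<in>EH. e1 \<noteq> e2 \<and> endsH e1 \<inter> endsH e2 \<noteq> {} \<longrightarrow> c e1 \<noteq> c e2"
    and w: "w \<in> VH" and i: "i < k"
  shows "\<exists>!h. h \<in> inc_edges EH endsH w \<and> c h = i"
proof -
  let ?I = "inc_edges EH endsH w"
  have inj: "inj_on c ?I" unfolding inj_on_def inc_edges_def using c2 by blast
  have fin: "finite ?I" using mg unfolding multigraph_def inc_edges_def by auto
  have "card (c ` ?I) = k" using card_image[OF inj] reg w unfolding regular_def by auto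
  moreover have "c ` ?I \<subseteq> {..<k}" using c1 unfolding inc_edges_def by auto
  ultimately have "c ` ?I = {..<k}" by (simp add: card_subset_eq)
  then have "\<exists>h\<in>?I. c h = i" using i by (metis imageE lessThan_iff)
  then show ?thesis using inj unfolding inj_on_def by blast
qed




lemma preimage_count:
  assumes hom: "graph_hom V' E' ends' VH EH endsH fV fE"
    and mat: "\<forall>h\<in>EH. is_matching ends' {e\<in>E'. fE e = h}"
    and mg: "multigraph VH EH endsH"
    and G': "\<forall>e\<in>E'. card (ends' e) = 2 \<and> ends' e \<subseteq> V'"
    and finV: "finite V'" and finE: "finite E'" and h: "h \<in> EH" and a: "a \<in> endsH h"
  shows "card {e\<in>E'. fE e = h} = card {z\<in>V'. fV z = a \<and> (\<exists>e\<in>E'. fE e = h \<and> z \<in> ends' e)}"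
proof -
  let ?X = "{e\<in>E'. fE e = h}" and ?S = "{z\<in>V'. fV z = a}"
  have fE: "\<forall>e\<in>E'. fE e \<in> EH" and ee: "\<forall>e\<in>E'. endsH (fE e) = fV ` ends' e"
    using hom unfolding graph_hom_def by auto
  have ch: "card (endsH h) = 2" using mg h unfolding multigraph_def by auto
  have one: "card {z\<in>?S. z \<in> ends' e} = 1" if e: "e \<in> ?X" for e
  proof -
    from e G' have "card (ends' e) = 2" and sub: "ends' e \<subseteq> V'" by auto
    then obtain p q where pq: "ends' e = {p,q}" "p \<noteq> q" by (meson card_2_iff)
    have eh: "endsH h = {fV p, fV q}" using ee e pq by auto
    with ch have ne: "fV p \<noteq> fV q" by (metis card_2_iff doubleton_eq_iff insert_absorb2)
    have "a = fV p \<or> a = fV q" using a eh by auto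
    then have "{z\<in>?S. z \<in> ends' e} = {p} \<or> {z\<in>?S. z \<in> ends' e} = {q}"
      using pq ne sub by auto
    then show ?thesis by auto
  qed
  have two: "card {e\<in>?X. z \<in> ends' e} = (if (\<exists>e\<in>E'. fE e = h \<and> z \<in> ends' e) then 1 else 0)"
    if z: "z \<in> ?S" for z
  proof (cases "\<exists>e\<in>E'. fE e = h \<and> z \<in> ends' e")
    case True
    then obtain e0 where e0: "e0\<in>E'" "fE e0 = h" "z \<in> ends' e0" by blast
    have "{e\<in>?X. z \<in> ends' e} = {e0}"
      using e0 match_inj[OF mat fE] by auto
    then show ?thesis using True by simp
  next
    case False
    then have "{e\<in>?X. z \<in> ends' e} = {}" by auto
    then show ?thesis using False by (simp only: card.empty if_False)
  qed
  have finS: "finite ?S" using finV by auto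
  have finX: "finite ?X" using finE by auto
  have "(\<Sum>z\<in>?S. card {e\<in>?X. z \<in> ends' e}) = (\<Sum>e\<in>?X. (1::nat))"
    by (rule sum_multicount_gen[OF finS finX]) (use one in auto)
  also have "\<dots> = card ?X" by simp
  finally have A: "card ?X = (\<Sum>z\<in>?S. card {e\<in>?X. z \<in> ends' e})" by simp
  also have "\<dots> = (\<Sum>z\<in>?S. if (\<exists>e\<in>E'. fE e = h \<and> z \<in> ends' e) then 1 else 0)"
    using two by (intro sum.cong) auto
  also have "\<dots> = card {z\<in>?S. \<exists>e\<in>E'. fE e = h \<and> z \<in> ends' e}"
    using finS by (simp add: sum.inter_filter[symmetric])
  finally show ?thesis by (simp add: conj_assoc)
qed




lemma split_Inl: "Inl v \<in> split_ends ends u e \<longleftrightarrow> v \<in> ends e \<and> v \<noteq> u"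
  unfolding split_ends_def by auto

lemma split_Inr: "Inr e' \<in> split_ends ends u e \<longleftrightarrow> e' = e \<and> u \<in> ends e"
  unfolding split_ends_def by (auto split: if_splits)

lemma split_props:
  assumes "multigraph V E ends" "e \<in> E"
  shows "split_ends ends u e \<subseteq> split_V V E ends u \<and> card (split_ends ends u e) = 2"
proof -
  have e: "ends e \<subseteq> V" "card (ends e) = 2" using assms unfolding multigraph_def by auto
  have "inj_on (\<lambda>w. if w = u then Inr e else Inl w) (ends e)"
    unfolding inj_on_def by auto
  then have "card (split_ends ends u e) = 2" unfolding split_ends_def using e card_image by metis
  moreover have "split_ends ends u e \<subseteq> split_V V E ends u"
    unfolding split_ends_def split_V_def inc_edges_def using e assms(2) by auto
  ultimately show ?thesis by simp
qed

lemma split_finite: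
  assumes "multigraph V E ends" shows "finite (split_V V E ends u)"
  using assms unfolding multigraph_def split_V_def inc_edges_def by auto

lemma split_inc_Inl:
  assumes "v \<noteq> u"
  shows "inc_edges E (split_ends ends u) (Inl v) = inc_edges E ends v"
  unfolding inc_edges_def using assms by (simp add: split_Inl)

lemma bij_colour_one:
  assumes "bij_betw f A B" "\<exists>!h. h \<in> B \<and> c h = i"
  shows "card {e\<in>A. c (f e) = i} = 1"
proof -
  obtain h where h: "h \<in> B" "c h = i" "\<forall>h'. h' \<in> B \<and> c h' = i \<longrightarrow> h' = h" using assms(2) by blast
  obtain e where e: "e \<in> A" "f e = h" using assms(1) h(1) by (metis bij_betw_imp_surj_on imageE)
  have "{e\<in>A. c (f e) = i} = {e}"
  proof (intro equalityI subsetI)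
    fix e' assume "e' \<in> {e\<in>A. c (f e) = i}"
    then have "e' \<in> A" "c (f e') = i" by auto
    moreover have "f e' \<in> B" using \<open>e' \<in> A\<close> assms(1) by (simp add: bij_betw_apply)
    ultimately have "f e' = h" using h(3) by blast
    then have "f e' = f e" using e by simp
    then have "e' = e" using e(1) \<open>e' \<in> A\<close> assms(1) by (metis bij_betw_imp_inj_on inj_on_def)
    then show "e' \<in> {e}" by simp
  next
    fix e' assume "e' \<in> {e}"
    then show "e' \<in> {e\<in>A. c (f e) = i}" using e h(2) by simp
  qed
  then show ?thesis by simp
qed

lemma card_fibres:
  assumes "finite A" "finite B" "\<forall>a\<in>A. \<phi> a \<in> B"
  shows "card A = (\<Sum>b\<in>B. card {a\<in>A. \<phi> a = b})"
proof -
  have "(\<Sum>b\<in>B. card {a\<in>A. \<phi> a = b}) = (\<Sum>a\<in>A. (1::nat))"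
  proof (rule sum_multicount_gen[OF assms(2,1)], intro ballI)
    fix a assume "a \<in> A"
    then have "{b\<in>B. \<phi> a = b} = {\<phi> a}" using assms(3) by auto
    then show "card {b\<in>B. \<phi> a = b} = 1" by simp
  qed
  then show ?thesis by simp
qed

lemma conn_cross:
  assumes conn: "connected_graph V E ends" and T: "T \<subseteq> V" "a \<in> T" "b \<in> V" "b \<notin> T"
  shows "\<exists>h\<in>E. \<exists>a'\<in>ends h. \<exists>b'\<in>ends h. a' \<in> T \<and> b' \<notin> T"
proof (rule ccontr)
  assume no: "\<not> ?thesis"
  have "(a, b) \<in> (adj_rel E ends)\<^sup>*" using conn T unfolding connected_graph_def by auto
  then have "b \<in> T"
  proof (induction rule: rtrancl_induct)
    case base then show ?case using T by simp
  next
    case (step y z)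
    then obtain h where "h \<in> E" "ends h = {y, z}" unfolding adj_rel_def by auto
    then show ?case using no step by blast
  qed
  then show False using T by simp
qed




locale pc =
  fixes k :: nat and VH :: "'w set" and EH :: "'f set" and endsH :: "'f \<Rightarrow> 'w set"
    and VG :: "'v set" and EG :: "'e set" and endsG :: "'e \<Rightarrow> 'v set" and u :: 'v
    and c :: "'f \<Rightarrow> nat" and fV :: "'v + 'e \<Rightarrow> 'w" and fE :: "'e \<Rightarrow> 'f"
    and gV :: "'v \<Rightarrow> 'w" and gE :: "'e \<Rightarrow> 'f"
  assumes k1: "k \<ge> 1" and mgH: "multigraph VH EH endsH" and connH: "connected_graph VH EH endsH"
    and regH: "regular k VH EH endsH"
    and c1: "\<forall>e\<in>EH. c e < k"
    and c2: "\<forall>e1\<in>EH. \<forall>e2\<in>EH. e1 \<noteq> e2 \<and> endsH e1 \<inter> endsH e2 \<noteq> {} \<longrightarrow> c e1 \<noteq> c e2"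
    and sgG: "simple_graph VG EG endsG" and regG: "regular k VG EG endsG" and uV: "u \<in> VG"
    and cov: "covering_projection VG EG endsG VH EH endsH gV gE"
    and pcov: "partial_covering_projection (split_V VG EG endsG u) EG (split_ends endsG u) VH EH endsH fV fE"
begin

abbreviation "P \<equiv> inc_edges EG endsG u"
abbreviation "SV \<equiv> split_V VG EG endsG u"
abbreviation "SE \<equiv> split_ends endsG u"

lemma mgG: "multigraph VG EG endsG" using sgG unfolding simple_graph_def by simp
lemma finVG: "finite VG" and finEG: "finite EG" using mgG unfolding multigraph_def by auto
lemma finVH: "finite VH" and finEH: "finite EH" using mgH unfolding multigraph_def by auto
lemma endsG: "e \<in> EG \<Longrightarrow> endsG e \<subseteq> VG \<and> card (endsG e) = 2" using mgG unfolding multigraph_def by auto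
lemma endsH: "h \<in> EH \<Longrightarrow> endsH h \<subseteq> VH \<and> card (endsH h) = 2" using mgH unfolding multigraph_def by auto

lemma homf: "graph_hom SV EG SE VH EH endsH fV fE" and surjV: "fV ` SV = VH"
  and matf: "\<forall>h\<in>EH. is_matching SE {e\<in>EG. fE e = h}"
  using pcov unfolding partial_covering_projection_def by auto
lemma homg: "graph_hom VG EG endsG VH EH endsH gV gE"
  and matg: "\<forall>h\<in>EH. is_matching endsG {e\<in>EG. gE e = h}"
  and covg: "\<forall>h\<in>EH. \<forall>v\<in>VG. gV v \<in> endsH h \<longrightarrow> (\<exists>e\<in>EG. gE e = h \<and> v \<in> endsG e)"
  using cov unfolding covering_projection_def by auto

lemma fEin: "e \<in> EG \<Longrightarrow> fE e \<in> EH" using homf unfolding graph_hom_def by auto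
lemma gEin: "e \<in> EG \<Longrightarrow> gE e \<in> EH" using homg unfolding graph_hom_def by auto
lemma fVin: "z \<in> SV \<Longrightarrow> fV z \<in> VH" using homf unfolding graph_hom_def by auto
lemma gVin: "v \<in> VG \<Longrightarrow> gV v \<in> VH" using homg unfolding graph_hom_def by auto
lemma fends: "e \<in> EG \<Longrightarrow> endsH (fE e) = fV ` SE e" using homf unfolding graph_hom_def by auto

lemma cardP: "card P = k" using regG uV unfolding regular_def by auto
lemma Pin: "e \<in> P \<Longrightarrow> e \<in> EG \<and> u \<in> endsG e" unfolding inc_edges_def by auto
lemma finP: "finite P" using finEG unfolding inc_edges_def by auto
lemma Inl_SV: "v \<in> VG \<Longrightarrow> v \<noteq> u \<Longrightarrow> Inl v \<in> SV" unfolding split_V_def by auto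
lemma Inr_SV: "e \<in> P \<Longrightarrow> Inr e \<in> SV" unfolding split_V_def by auto
lemma SE_props: "e \<in> EG \<Longrightarrow> SE e \<subseteq> SV \<and> card (SE e) = 2" using split_props[OF mgG] by blast
lemma finSV: "finite SV" using split_finite[OF mgG] .

lemma locbij_f:
  assumes "v \<in> VG" "v \<noteq> u"
  shows "bij_betw fE (inc_edges EG endsG v) (inc_edges EH endsH (fV (Inl v)))"
proof -
  have "card (inc_edges EG endsG v) = k" using regG assms(1) unfolding regular_def by simp
  then have "card (inc_edges EG SE (Inl v)) = k"
    using split_inc_Inl[OF assms(2), of EG endsG] by simp
  from loc_bij[OF homf matf mgH regH Inl_SV[OF assms] this finEG]
  show ?thesis using split_inc_Inl[OF assms(2), of EG endsG] by simp
qed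

lemma locbij_g:
  assumes "v \<in> VG"
  shows "bij_betw gE (inc_edges EG endsG v) (inc_edges EH endsH (gV v))"
  using loc_bij[OF homg matg mgH regH assms _ finEG] regG assms unfolding regular_def by simp

lemma colH: "w \<in> VH \<Longrightarrow> i < k \<Longrightarrow> \<exists>!h. h \<in> inc_edges EH endsH w \<and> c h = i"
  using colour_at[OF mgH regH c1 c2] by blast

lemma evenG:
  assumes i: "i < k"
  shows "card VG = 2 * card {e\<in>EG. c (gE e) = i}"
proof -
  let ?Y = "{e\<in>EG. c (gE e) = i}"
  have finY: "finite ?Y" using finEG by simp
  have "(\<Sum>v\<in>VG. card {e\<in>?Y. v \<in> endsG e}) = (\<Sum>e\<in>?Y. 2)"
  proof (rule sum_multicount_gen[OF finVG finY], intro ballI)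
    fix e assume "e \<in> ?Y"
    then have "{v\<in>VG. v \<in> endsG e} = endsG e" using endsG by auto
    then show "card {v\<in>VG. v \<in> endsG e} = 2" using endsG \<open>e \<in> ?Y\<close> by simp
  qed
  moreover have "card {e\<in>?Y. v \<in> endsG e} = 1" if v: "v \<in> VG" for v
  proof -
    have "{e\<in>?Y. v \<in> endsG e} = {e\<in>inc_edges EG endsG v. c (gE e) = i}"
      unfolding inc_edges_def by auto
    then show ?thesis using bij_colour_one[OF locbij_g[OF v] colH[OF gVin[OF v] i]] by simp
  qed
  ultimately show ?thesis by simp
qed

lemma countGu:
  assumes i: "i < k"
  shows "2 * card {e\<in>EG. c (fE e) = i} = (card VG - 1) + card {e\<in>P. c (fE e) = i}"
proof -
  let ?X = "{e\<in>EG. c (fE e) = i}"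
  have finX: "finite ?X" using finEG by simp
  have "(\<Sum>z\<in>SV. card {e\<in>?X. z \<in> SE e}) = (\<Sum>e\<in>?X. 2)"
  proof (rule sum_multicount_gen[OF finSV finX], intro ballI)
    fix e assume "e \<in> ?X"
    then have "{z\<in>SV. z \<in> SE e} = SE e" using SE_props by auto
    then show "card {z\<in>SV. z \<in> SE e} = 2" using SE_props \<open>e \<in> ?X\<close> by simp
  qed
  then have A: "2 * card ?X = (\<Sum>z\<in>SV. card {e\<in>?X. z \<in> SE e})" by simp
  have SVeq: "SV = Inl ` (VG - {u}) \<union> Inr ` P" unfolding split_V_def by simp
  have "(\<Sum>z\<in>SV. card {e\<in>?X. z \<in> SE e}) =
        (\<Sum>z\<in>Inl ` (VG - {u}). card {e\<in>?X. z \<in> SE e}) + (\<Sum>z\<in>Inr ` P. card {e\<in>?X. z \<in> SE e})"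
    unfolding SVeq using finVG finP by (intro sum.union_disjoint) auto
  also have "(\<Sum>z\<in>Inl ` (VG - {u}). card {e\<in>?X. z \<in> SE e}) = (\<Sum>v\<in>VG - {u}. card {e\<in>?X. Inl v \<in> SE e})"
    by (simp add: sum.reindex)
  also have "\<dots> = (\<Sum>v\<in>VG - {u}. 1)"
  proof (rule sum.cong[OF refl])
    fix v assume v: "v \<in> VG - {u}"
    have "{e\<in>?X. Inl v \<in> SE e} = {e\<in>inc_edges EG endsG v. c (fE e) = i}"
      using v unfolding inc_edges_def by (auto simp: split_Inl)
    then show "card {e\<in>?X. Inl v \<in> SE e} = 1"
      using bij_colour_one[OF locbij_f colH[OF fVin[OF Inl_SV] i]] v by auto
  qed
  also have "(\<Sum>z\<in>Inr ` P. card {e\<in>?X. z \<in> SE e}) = (\<Sum>e'\<in>P. card {e\<in>?X. Inr e' \<in> SE e})"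
    by (simp add: sum.reindex)
  also have "\<dots> = (\<Sum>e'\<in>P. if c (fE e') = i then 1 else 0)"
  proof (rule sum.cong[OF refl])
    fix e' assume e': "e' \<in> P"
    have "{e\<in>?X. Inr e' \<in> SE e} = (if c (fE e') = i then {e'} else {})"
      using e' Pin[OF e'] by (auto simp: split_Inr)
    then show "card {e\<in>?X. Inr e' \<in> SE e} = (if c (fE e') = i then 1 else 0)" by simp
  qed
  also have "\<dots> = card {e\<in>P. c (fE e) = i}"
    using finP by (simp add: sum.inter_filter[symmetric])
  finally show ?thesis using A uV finVG by simp
qed

lemma col_surj: "(\<lambda>e. c (fE e)) ` P = {..<k}"
proof
  show "(\<lambda>e. c (fE e)) ` P \<subseteq> {..<k}" using c1 fEin Pin by auto
  show "{..<k} \<subseteq> (\<lambda>e. c (fE e)) ` P"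
  proof
    fix i assume "i \<in> {..<k}"
    then have i: "i < k" by simp
    have n1: "card VG \<ge> 1" using uV finVG by (metis One_nat_def Suc_leI card_gt_0_iff empty_iff)
    have "odd (card {e\<in>P. c (fE e) = i})"
    proof -
      have ar: "\<And>n y a p::nat. n = 2*y \<Longrightarrow> 2*a = n - 1 + p \<Longrightarrow> 1 \<le> n \<Longrightarrow> odd p" by presburger
      show ?thesis by (rule ar[OF evenG[OF i] countGu[OF i] n1])
    qed
    then have "card {e\<in>P. c (fE e) = i} \<noteq> 0" by (metis even_zero)
    then have "{e\<in>P. c (fE e) = i} \<noteq> {}" by (metis card.empty)
    then show "i \<in> (\<lambda>e. c (fE e)) ` P" by auto
  qed
qed

lemma col_inj: "inj_on (\<lambda>e. c (fE e)) P"
proof (rule eq_card_imp_inj_on[OF finP])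
  show "card ((\<lambda>e. c (fE e)) ` P) = card P" unfolding col_surj cardP by simp
qed

lemma injP: "inj_on fE P"
  using col_inj unfolding inj_on_def by auto

end



context pc begin

abbreviation "nf w \<equiv> card {v\<in>VG - {u}. fV (Inl v) = w}"
abbreviation "ng w \<equiv> card {v\<in>VG. gV v = w}"
abbreviation "q a h \<equiv> card {e\<in>P. fE e = h \<and> fV (Inr e) = a}"

lemma Inr_SE: "e \<in> P \<Longrightarrow> Inr e \<in> SE e" using Pin by (simp add: split_Inr)

lemma rel_f:
  assumes h: "h \<in> EH" and a: "a \<in> endsH h"
  shows "card {e\<in>EG. fE e = h} = nf a + q a h"
proof -
  have G': "\<forall>e\<in>EG. card (SE e) = 2 \<and> SE e \<subseteq> SV" using SE_props by blast
  let ?A = "{v\<in>VG - {u}. fV (Inl v) = a}" and ?Q = "{e\<in>P. fE e = h \<and> fV (Inr e) = a}"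
  have Z: "{z\<in>SV. fV z = a \<and> (\<exists>e\<in>EG. fE e = h \<and> z \<in> SE e)} = Inl ` ?A \<union> Inr ` ?Q"
  proof (intro equalityI subsetI)
    fix z assume z: "z \<in> {z\<in>SV. fV z = a \<and> (\<exists>e\<in>EG. fE e = h \<and> z \<in> SE e)}"
    then obtain e where e: "e \<in> EG" "fE e = h" "z \<in> SE e" by blast
    show "z \<in> Inl ` ?A \<union> Inr ` ?Q"
    proof (cases z)
      case (Inl v)
      then show ?thesis using z unfolding split_V_def by auto
    next
      case (Inr e')
      then have "e' = e" "e' \<in> P" using e z unfolding split_V_def by (auto simp: split_Inr)
      then show ?thesis using z e Inr by auto
    qed
  next
    fix z assume z: "z \<in> Inl ` ?A \<union> Inr ` ?Q"
    show "z \<in> {z\<in>SV. fV z = a \<and> (\<exists>e\<in>EG. fE e = h \<and> z \<in> SE e)}"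
    proof (cases z)
      case (Inl v)
      then have v: "v \<in> VG" "v \<noteq> u" "fV (Inl v) = a" using z by auto
      then have "h \<in> inc_edges EH endsH (fV (Inl v))" using h a unfolding inc_edges_def by simp
      then obtain e where "e \<in> inc_edges EG endsG v" "fE e = h"
        using locbij_f[OF v(1,2)] by (metis bij_betw_imp_surj_on imageE)
      then show ?thesis using v Inl Inl_SV[OF v(1,2)] unfolding inc_edges_def by (auto simp: split_Inl)
    next
      case (Inr e')
      then have "e' \<in> ?Q" using z by auto
      then show ?thesis using Inr Inr_SV Inr_SE Pin by blast
    qed
  qed
  have "card {e\<in>EG. fE e = h} = card (Inl ` ?A \<union> Inr ` ?Q)"
    using preimage_count[OF homf matf mgH G' finSV finEG h a] Z by simp
  also have "\<dots> = card (Inl ` ?A :: ('v+'e) set) + card (Inr ` ?Q :: ('v+'e) set)"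
  proof -
    have f1: "finite (Inl ` ?A)" using finVG by simp
    have f2: "finite (Inr ` ?Q)" using finP by simp
    have d: "Inl ` ?A \<inter> Inr ` ?Q = {}" by auto
    show ?thesis using card_Un_disjoint[OF f1 f2 d] .
  qed
  also have "\<dots> = card ?A + card ?Q" by (simp add: card_image)
  finally show ?thesis .
qed

lemma rel_g:
  assumes h: "h \<in> EH" and a: "a \<in> endsH h"
  shows "card {e\<in>EG. gE e = h} = ng a"
proof -
  have G': "\<forall>e\<in>EG. card (endsG e) = 2 \<and> endsG e \<subseteq> VG" using endsG by blast
  have "{v\<in>VG. gV v = a \<and> (\<exists>e\<in>EG. gE e = h \<and> v \<in> endsG e)} = {v\<in>VG. gV v = a}"
    using covg h a by blast
  then show ?thesis using preimage_count[OF homg matg mgH G' finVG finEG h a] by simp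
qed

lemma ng_const:
  assumes "w \<in> VH" "w' \<in> VH" shows "ng w = ng w'"
proof -
  have "(w, w') \<in> (adj_rel EH endsH)\<^sup>*" using connH assms unfolding connected_graph_def by auto
  then show ?thesis
  proof (induction rule: rtrancl_induct)
    case base then show ?case by simp
  next
    case (step y z)
    then obtain h where "h \<in> EH" "endsH h = {y, z}" unfolding adj_rel_def by auto
    then have "ng y = ng z" using rel_g[of h y] rel_g[of h z] by simp
    then show ?case using step by simp
  qed
qed

lemma cardVG: "card VG = (\<Sum>w\<in>VH. ng w)"
  using card_fibres[OF finVG finVH] gVin by blast

lemma cardVG1: "card (VG - {u}) = (\<Sum>w\<in>VH. nf w)"
  using card_fibres[OF _ finVH, of "VG - {u}" "\<lambda>v. fV (Inl v)"] finVG fVin Inl_SV by blast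

lemma q_sum:
  assumes "a \<noteq> b" shows "q a h + q b h \<le> 1"
proof -
  have "card {e\<in>P. fE e = h} \<le> Suc 0"
    using injP finP by (subst card_le_Suc0_iff_eq) (auto simp: inj_on_def)
  moreover have "q a h + q b h = card ({e\<in>P. fE e = h \<and> fV (Inr e) = a} \<union> {e\<in>P. fE e = h \<and> fV (Inr e) = b})"
    using assms finP by (subst card_Un_disjoint) auto
  moreover have "card ({e\<in>P. fE e = h \<and> fV (Inr e) = a} \<union> {e\<in>P. fE e = h \<and> fV (Inr e) = b}) \<le> card {e\<in>P. fE e = h}"
    using finP by (intro card_mono) auto
  ultimately show ?thesis by simp
qed

end



context pc begin

lemma cross_info:
  assumes T: "T = {w\<in>VH. nf w < l}" and h: "h \<in> EH" and a: "a \<in> endsH h" "a \<in> T"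
    and b: "b \<in> endsH h" "b \<notin> T"
  shows "\<exists>e\<in>P. fE e = h \<and> fV (Inr e) = a \<and> nf a + 1 = l \<and> nf b = nf a + 1"
proof -
  have bV: "b \<in> VH" using endsH[OF h] b by auto
  have lt: "nf a < l" "l \<le> nf b" using a b bV T by auto
  then have ab: "a \<noteq> b" by auto
  have r: "nf a + q a h = nf b + q b h" using rel_f[OF h a(1)] rel_f[OF h b(1)] by simp
  have qs: "q a h + q b h \<le> 1" using q_sum[OF ab] .
  have "q a h = 1" "q b h = 0" "nf b = nf a + 1" using r qs lt by linarith+
  then have "{e\<in>P. fE e = h \<and> fV (Inr e) = a} \<noteq> {}" by (metis card.empty zero_neq_one)
  then show ?thesis using \<open>nf b = nf a + 1\<close> lt by auto
qed

lemma t_one: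
  assumes h: "h \<in> EH" and t: "card {w\<in>T. w \<in> endsH h} = 1"
  shows "\<exists>a\<in>endsH h. \<exists>b\<in>endsH h. a \<in> T \<and> b \<notin> T"
proof -
  obtain p q where pq: "endsH h = {p, q}" "p \<noteq> q" using endsH[OF h] by (meson card_2_iff)
  show ?thesis
  proof (rule ccontr)
    assume "\<not> ?thesis"
    then have "(p \<in> T \<and> q \<in> T) \<or> (p \<notin> T \<and> q \<notin> T)" using pq by auto
    then have "{w\<in>T. w \<in> endsH h} = {p, q} \<or> {w\<in>T. w \<in> endsH h} = {}" using pq by auto
    then show False using t pq by (metis card.empty card_2_iff zero_neq_one numeral_One numeral_eq_iff semiring_norm(85))
  qed
qed

lemma t_le2: "h \<in> EH \<Longrightarrow> card {w\<in>T. w \<in> endsH h} \<le> 2"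
proof -
  assume h: "h \<in> EH"
  have "{w\<in>T. w \<in> endsH h} \<subseteq> endsH h" by auto
  moreover have "finite (endsH h)" "card (endsH h) = 2" using endsH[OF h] finVH finite_subset by auto
  ultimately show ?thesis by (metis card_mono)
qed

lemma parity:
  assumes T: "T = {w\<in>VH. nf w < l}" and e: "e \<in> P"
  shows "odd (card T) \<longleftrightarrow> card {w\<in>T. w \<in> endsH (fE e)} = 1"
proof -
  let ?h = "fE e" let ?i = "c (fE e)"
  let ?M = "{h'\<in>EH. c h' = ?i}"
  let ?t = "\<lambda>h'. card {w\<in>T. w \<in> endsH h'}"
  have hE: "?h \<in> EH" using fEin Pin e by blast
  have i: "?i < k" using c1 hE by blast
  have finT: "finite T" using finVH T by simp
  have finM: "finite ?M" using finEH by simp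
  have "(\<Sum>w\<in>T. card {h'\<in>?M. w \<in> endsH h'}) = (\<Sum>h'\<in>?M. ?t h')"
    by (rule sum_multicount_gen[OF finT finM]) simp
  moreover have "card {h'\<in>?M. w \<in> endsH h'} = 1" if w: "w \<in> T" for w
  proof -
    have wV: "w \<in> VH" using w T by simp
    obtain h1 where h1: "h1 \<in> inc_edges EH endsH w" "c h1 = ?i"
      "\<forall>h'. h' \<in> inc_edges EH endsH w \<and> c h' = ?i \<longrightarrow> h' = h1"
      using colH[OF wV i] by blast
    have "{h'\<in>?M. w \<in> endsH h'} = {h1}"
    proof (intro equalityI subsetI)
      fix h' assume "h' \<in> {h'\<in>?M. w \<in> endsH h'}"
      then have "h' \<in> inc_edges EH endsH w \<and> c h' = ?i" unfolding inc_edges_def by auto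
      then have "h' = h1" using h1(3) by blast
      then show "h' \<in> {h1}" by simp
    next
      fix h' assume "h' \<in> {h1}"
      then show "h' \<in> {h'\<in>?M. w \<in> endsH h'}" using h1(1,2) unfolding inc_edges_def by auto
    qed
    then show ?thesis by simp
  qed
  ultimately have cT: "card T = (\<Sum>h'\<in>?M. ?t h')" by simp
  have hM: "?h \<in> ?M" using hE by simp
  have split: "(\<Sum>h'\<in>?M. ?t h') = ?t ?h + (\<Sum>h'\<in>?M - {?h}. ?t h')"
    using sum.remove[OF finM hM] by simp
  have ev: "even (\<Sum>h'\<in>?M - {?h}. ?t h')"
  proof (rule dvd_sum)
    fix h' assume h': "h' \<in> ?M - {?h}"
    have "?t h' \<noteq> 1"
    proof
      assume "?t h' = 1"
      then obtain a b where ab: "a \<in> endsH h'" "b \<in> endsH h'" "a \<in> T" "b \<notin> T"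
        using t_one h' by blast
      obtain e' where e': "e' \<in> P" "fE e' = h'" using cross_info[OF T _ ab(1,3,2,4)] h' by blast
      have "c (fE e') = c (fE e)" using e' h' by simp
      then have "e' = e" using col_inj e e'(1) unfolding inj_on_def by blast
      then show False using e' h' by simp
    qed
    moreover have "?t h' \<le> 2" using t_le2 h' by blast
    ultimately have "?t h' = 0 \<or> ?t h' = 2" by linarith
    then show "2 dvd ?t h'" by auto
  qed
  have "?t ?h \<le> 2" using t_le2 hE by blast
  moreover have ar: "\<And>n::nat. n \<le> 2 \<Longrightarrow> odd n \<longleftrightarrow> n = 1" by presburger
  ultimately have "odd (?t ?h) \<longleftrightarrow> ?t ?h = 1" by blast
  moreover have "odd (card T) \<longleftrightarrow> odd (?t ?h)" unfolding cT split using ev by simp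
  ultimately show ?thesis by simp
qed

lemma level:
  assumes T: "T = {w\<in>VH. nf w < l}" and ne: "T \<noteq> {}" "VH - T \<noteq> {}"
  shows "\<forall>e\<in>P. nf (fV (Inr e)) + 1 = l"
proof -
  obtain a where a: "a \<in> T" using ne by blast
  obtain b where b: "b \<in> VH" "b \<notin> T" using ne by blast
  have TV: "T \<subseteq> VH" using T by auto
  obtain h0 a' b' where h0: "h0 \<in> EH" "a' \<in> endsH h0" "b' \<in> endsH h0" "a' \<in> T" "b' \<notin> T"
    using conn_cross[OF connH TV a b] by blast
  obtain e0 where e0: "e0 \<in> P" "fE e0 = h0" using cross_info[OF T h0(1,2,4,3,5)] by blast
  have "card {w\<in>T. w \<in> endsH h0} = 1"
  proof -
    obtain p q where pq: "endsH h0 = {p, q}" "p \<noteq> q" using endsH[OF h0(1)] by (meson card_2_iff)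
    have "a' \<noteq> b'" using h0 by blast
    then have "endsH h0 = {a', b'}" using pq h0(2,3) by auto
    then have "{w\<in>T. w \<in> endsH h0} = {a'}" using h0(4,5) by blast
    then show ?thesis by simp
  qed
  then have oddT: "odd (card T)" using parity[OF T e0(1)] e0(2) by simp
  show ?thesis
  proof
    fix e assume e: "e \<in> P"
    have "card {w\<in>T. w \<in> endsH (fE e)} = 1" using parity[OF T e] oddT by simp
    then obtain a1 b1 where ab: "a1 \<in> endsH (fE e)" "b1 \<in> endsH (fE e)" "a1 \<in> T" "b1 \<notin> T"
      using t_one[OF fEin[OF conjunct1[OF Pin[OF e]]]] by blast
    obtain e' where e': "e' \<in> P" "fE e' = fE e" "fV (Inr e') = a1" "nf a1 + 1 = l"
      using cross_info[OF T fEin[OF conjunct1[OF Pin[OF e]]] ab(1,3,2,4)] by blast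
    have "e' = e" using injP e'(1,2) e unfolding inj_on_def by blast
    then show "nf (fV (Inr e)) + 1 = l" using e' by simp
  qed
qed

end



context pc begin

lemma partb: "\<forall>e1\<in>P. \<forall>e2\<in>P. fV (Inr e1) = fV (Inr e2)"
proof -
  have "P \<noteq> {}" using cardP k1 by auto
  then obtain e0 where e0: "e0 \<in> P" by blast
  define a0 where "a0 = fV (Inr e0)"
  define h0 where "h0 = fE e0"
  have h0E: "h0 \<in> EH" unfolding h0_def using fEin Pin e0 by blast
  have a0h: "a0 \<in> endsH h0" unfolding a0_def h0_def using fends[of e0] Inr_SE[OF e0] Pin[OF e0] by simp
  have a0V: "a0 \<in> VH" using endsH[OF h0E] a0h by auto
  obtain b0 where b0: "endsH h0 = {a0, b0}" "a0 \<noteq> b0"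
  proof -
    obtain p q where pq: "endsH h0 = {p, q}" "p \<noteq> q" using endsH[OF h0E] by (meson card_2_iff)
    show ?thesis
    proof (cases "a0 = p")
      case True then show ?thesis using that pq by auto
    next
      case False then have "a0 = q" using a0h pq by auto
      then show ?thesis using that pq by auto
    qed
  qed
  have b0h: "b0 \<in> endsH h0" using b0 by auto
  have b0V: "b0 \<in> VH" using endsH[OF h0E] b0h by auto
  have r: "nf a0 + q a0 h0 = nf b0 + q b0 h0" using rel_f[OF h0E a0h] rel_f[OF h0E b0h] by simp
  have qs: "q a0 h0 + q b0 h0 \<le> 1" using q_sum[OF b0(2)] .
  have "{e\<in>P. fE e = h0 \<and> fV (Inr e) = a0} \<noteq> {}" using e0 unfolding a0_def h0_def by auto
  then have "q a0 h0 \<noteq> 0" using finP by simp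
  then have nb0: "nf b0 = nf a0 + 1" using r qs by linarith
  define l0 where "l0 = nf a0"
  have lev: "\<forall>e\<in>P. nf (fV (Inr e)) = l0"
  proof -
    have "{w\<in>VH. nf w < l0 + 1} \<noteq> {}" using a0V unfolding l0_def by auto
    moreover have "VH - {w\<in>VH. nf w < l0 + 1} \<noteq> {}" using b0V nb0 unfolding l0_def by auto
    ultimately have "\<forall>e\<in>P. nf (fV (Inr e)) + 1 = l0 + 1" by (rule level[OF refl])
    then show ?thesis by simp
  qed
  have lower: "\<forall>w\<in>VH. l0 \<le> nf w"
  proof (rule ccontr)
    assume "\<not> ?thesis"
    then have "{w\<in>VH. nf w < l0} \<noteq> {}" by auto
    moreover have "VH - {w\<in>VH. nf w < l0} \<noteq> {}" using a0V unfolding l0_def by auto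
    ultimately have "\<forall>e\<in>P. nf (fV (Inr e)) + 1 = l0" by (rule level[OF refl])
    then have "nf (fV (Inr e0)) + 1 = l0" using e0 by blast
    then show False unfolding l0_def a0_def by simp
  qed
  have upper: "\<forall>w\<in>VH. nf w \<le> l0 + 1"
  proof (rule ccontr)
    assume "\<not> ?thesis"
    then have X: "VH - {w\<in>VH. nf w < l0 + 2} \<noteq> {}" by auto
    have "{w\<in>VH. nf w < l0 + 2} \<noteq> {}" using a0V unfolding l0_def by auto
    from this X have "\<forall>e\<in>P. nf (fV (Inr e)) + 1 = l0 + 2" by (rule level[OF refl])
    then have "nf (fV (Inr e0)) + 1 = l0 + 2" using e0 by blast
    then show False unfolding l0_def a0_def by simp
  qed
  define S where "S = {w\<in>VH. nf w = l0}"
  have SV: "S \<subseteq> VH" unfolding S_def by auto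
  have a0S: "a0 \<in> S" unfolding S_def l0_def using a0V by simp
  have b0S: "b0 \<in> VH - S" unfolding S_def l0_def using b0V nb0 by simp
  have sumf: "(\<Sum>w\<in>VH. nf w) = (\<Sum>w\<in>VH. l0 + (if w \<in> S then 0 else 1))"
  proof (rule sum.cong[OF refl])
    fix w assume w: "w \<in> VH"
    have lu: "l0 \<le> nf w" "nf w \<le> l0 + 1" using lower upper w by auto
    show "nf w = l0 + (if w \<in> S then 0 else 1)"
    proof (cases "w \<in> S")
      case True then show ?thesis unfolding S_def by simp
    next
      case False then have "nf w \<noteq> l0" using w unfolding S_def by simp
      then show ?thesis using False lu by simp
    qed
  qed
  also have "\<dots> = l0 * card VH + card (VH - S)"
    using finVH SV by (simp add: sum.distrib sum.If_cases Diff_eq Int_commute)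
  finally have s1: "(\<Sum>w\<in>VH. nf w) = l0 * card VH + card (VH - S)" .
  define m where "m = ng a0"
  have "(\<Sum>w\<in>VH. ng w) = (\<Sum>w\<in>VH. m)"
  proof (rule sum.cong[OF refl])
    fix w assume "w \<in> VH" then show "ng w = m" unfolding m_def by (rule ng_const[OF _ a0V])
  qed
  then have s2: "card VG = m * card VH" using cardVG by simp
  have s3: "card (VG - {u}) = card VG - 1" using uV finVG by simp
  define V where "V = card VH"
  define D where "D = card (VH - S)"
  have Vpos: "V > 0" unfolding V_def using a0V finVH card_gt_0_iff by blast
  have ne: "VH - S \<noteq> {}" using b0S by blast
  have "0 < card (VH - S)" using ne finVH by (simp add: card_gt_0_iff)
  then have D1: "D \<ge> 1" unfolding D_def by simp
  have ps: "VH - S \<subset> VH" using a0S SV by blast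
  have DV: "D < V" unfolding D_def V_def by (rule psubset_card_mono[OF finVH ps])
  have e1: "card (VG - {u}) = l0 * V + D" using cardVG1 s1 unfolding V_def D_def by simp
  have eq: "m * V - 1 = l0 * V + D" using e1 s3 s2 unfolding V_def by simp
  have mV: "m * V = l0 * V + D + 1" using eq D1 by linarith
  have "l0 * V < m * V" using mV by linarith
  then have lm: "l0 < m" by simp
  have "m * V \<le> (l0 + 1) * V" using mV DV by (simp add: algebra_simps)
  then have "m \<le> l0 + 1" using Vpos by (metis mult_le_cancel2 not_gr0)
  then have "m = l0 + 1" using lm by simp
  then have "D + 1 = V" using mV by (simp add: algebra_simps)
  then have "card S = 1" unfolding D_def V_def using card_Diff_subset[OF _ SV] finVH SV
    by (metis add_diff_cancel_left' card_mono diff_diff_cancel finite_subset plus_1_eq_Suc)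
  then have Seq: "S = {a0}" using a0S by (metis card_1_singletonE singletonD)
  have "\<forall>e\<in>P. fV (Inr e) = a0"
  proof
    fix e assume e: "e \<in> P"
    have "fV (Inr e) \<in> S" unfolding S_def using lev e fVin[OF Inr_SV[OF e]] by simp
    then show "fV (Inr e) = a0" using Seq by simp
  qed
  then show ?thesis by simp
qed

end



lemma cov_surjV:
  assumes connH: "connected_graph VH EH endsH"
    and cov: "covering_projection VG EG endsG VH EH endsH fV fE"
    and uV: "u \<in> VG" and x: "fV u = x" and mgG: "multigraph VG EG endsG"
  shows "fV ` VG = VH"
proof
  show "fV ` VG \<subseteq> VH" using cov unfolding covering_projection_def graph_hom_def by auto
  have xV: "x \<in> VH" using cov uV x unfolding covering_projection_def graph_hom_def by auto
  show "VH \<subseteq> fV ` VG"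
  proof
    fix w assume "w \<in> VH"
    then have "(x, w) \<in> (adj_rel EH endsH)\<^sup>*" using connH xV unfolding connected_graph_def by auto
    then show "w \<in> fV ` VG"
    proof (induction rule: rtrancl_induct)
      case base then show ?case using uV x by auto
    next
      case (step y z)
      then obtain h where h: "h \<in> EH" "endsH h = {y, z}" unfolding adj_rel_def by auto
      from step obtain v where v: "v \<in> VG" "fV v = y" by auto
      have "fV v \<in> endsH h" using h v by simp
      then obtain e where e: "e \<in> EG" "fE e = h" "v \<in> endsG e"
        using cov h(1) v(1) unfolding covering_projection_def by blast
      have "endsH h = fV ` endsG e" using cov e unfolding covering_projection_def graph_hom_def by auto
      moreover have "endsG e \<subseteq> VG"
        using mgG e unfolding multigraph_def by auto
      ultimately have "z \<in> fV ` endsG e" "fV ` endsG e \<subseteq> fV ` VG" using h by auto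
      then show ?case by blast
    qed
  qed
qed

lemma parta:
  fixes VG :: "'v set" and EG :: "'e set" and endsG :: "'e \<Rightarrow> 'v set"
  assumes connH: "connected_graph VH EH endsH" and mgH: "multigraph VH EH endsH"
    and mgG: "multigraph VG EG endsG" and uV: "u \<in> VG"
    and Pne: "inc_edges EG endsG u \<noteq> {}"
    and cov: "covering_projection VG EG endsG VH EH endsH fV fE"
  shows "partial_covering_projection (split_V VG EG endsG u) EG (split_ends endsG u) VH EH endsH
           (\<lambda>z. fV (case z of Inl v \<Rightarrow> v | Inr e \<Rightarrow> u)) fE"
proof -
  define \<pi> :: "'v + 'e \<Rightarrow> 'v" where "\<pi> = (\<lambda>z. case z of Inl v \<Rightarrow> v | Inr e \<Rightarrow> u)"
  have hom: "graph_hom VG EG endsG VH EH endsH fV fE"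
    and mat: "\<forall>h\<in>EH. is_matching endsG {e\<in>EG. fE e = h}"
    and cv: "\<forall>h\<in>EH. \<forall>v\<in>VG. fV v \<in> endsH h \<longrightarrow> (\<exists>e\<in>EG. fE e = h \<and> v \<in> endsG e)"
    using cov unfolding covering_projection_def by auto
  have pi_se: "\<pi> ` split_ends endsG u e = endsG e" for e
    unfolding split_ends_def \<pi>_def image_image by (auto simp: image_iff)
  have pi_sv: "\<pi> ` split_V VG EG endsG u = VG"
  proof
    show "\<pi> ` split_V VG EG endsG u \<subseteq> VG" unfolding split_V_def \<pi>_def using uV by auto
    show "VG \<subseteq> \<pi> ` split_V VG EG endsG u"
    proof
      fix v assume v: "v \<in> VG"
      show "v \<in> \<pi> ` split_V VG EG endsG u"
      proof (cases "v = u")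
        case True
        obtain e where "e \<in> inc_edges EG endsG u" using Pne by blast
        then have "Inr e \<in> split_V VG EG endsG u" unfolding split_V_def by auto
        moreover have "\<pi> (Inr e) = v" unfolding \<pi>_def using True by simp
        ultimately show ?thesis by force
      next
        case False
        then have "Inl v \<in> split_V VG EG endsG u" unfolding split_V_def using v by auto
        moreover have "\<pi> (Inl v) = v" unfolding \<pi>_def by simp
        ultimately show ?thesis by force
      qed
    qed
  qed
  have surjV: "fV ` VG = VH" using cov_surjV[OF connH cov uV refl mgG] .
  have g1: "graph_hom (split_V VG EG endsG u) EG (split_ends endsG u) VH EH endsH (fV \<circ> \<pi>) fE"
    unfolding graph_hom_def
  proof (intro conjI ballI)
    fix z assume "z \<in> split_V VG EG endsG u"
    then have "\<pi> z \<in> VG" using pi_sv by blast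
    then show "(fV \<circ> \<pi>) z \<in> VH" using hom unfolding graph_hom_def by auto
  next
    fix e assume "e \<in> EG" then show "fE e \<in> EH" using hom unfolding graph_hom_def by auto
  next
    fix e assume "e \<in> EG"
    then have "endsH (fE e) = fV ` endsG e" using hom unfolding graph_hom_def by auto
    moreover have "(fV \<circ> \<pi>) ` split_ends endsG u e = fV ` endsG e"
      by (simp only: image_comp[symmetric] pi_se)
    ultimately show "endsH (fE e) = (fV \<circ> \<pi>) ` split_ends endsG u e" by simp
  qed
  have g2: "(fV \<circ> \<pi>) ` split_V VG EG endsG u = VH" by (simp only: image_comp[symmetric] pi_sv surjV)
  have g3: "fE ` EG = EH"
  proof
    show "fE ` EG \<subseteq> EH" using hom unfolding graph_hom_def by auto
    show "EH \<subseteq> fE ` EG"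
    proof
      fix h assume h: "h \<in> EH"
      then have "card (endsH h) = 2" "endsH h \<subseteq> VH" using mgH unfolding multigraph_def by auto
      then obtain a where a: "a \<in> endsH h" "a \<in> VH" by (metis card.empty ex_in_conv subsetD zero_neq_numeral)
      then obtain v where v: "v \<in> VG" "fV v = a" using surjV by auto
      then obtain e where "e \<in> EG" "fE e = h" using cv h a by blast
      then show "h \<in> fE ` EG" by blast
    qed
  qed
  have g4: "\<forall>h\<in>EH. is_matching (split_ends endsG u) {e\<in>EG. fE e = h}"
    unfolding is_matching_def
  proof (intro ballI impI)
    fix h e1 e2 assume h: "h \<in> EH" and e1: "e1 \<in> {e\<in>EG. fE e = h}" and e2: "e2 \<in> {e\<in>EG. fE e = h}"
      and ne: "e1 \<noteq> e2"
    show "split_ends endsG u e1 \<inter> split_ends endsG u e2 = {}"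
    proof (rule ccontr)
      assume "split_ends endsG u e1 \<inter> split_ends endsG u e2 \<noteq> {}"
      then obtain z where "z \<in> split_ends endsG u e1" "z \<in> split_ends endsG u e2" by blast
      then have "\<pi> z \<in> endsG e1" "\<pi> z \<in> endsG e2" using pi_se by blast+
      then show False using mat h e1 e2 ne unfolding is_matching_def by blast
    qed
  qed
  show ?thesis unfolding partial_covering_projection_def
    using g1 g2 g3 g4 unfolding \<pi>_def comp_def by simp
qed


theorem mainTheorem6:
  fixes k :: nat
    and VH :: "'w set" and EH :: "'f set" and endsH :: "'f \<Rightarrow> 'w set"
    and VG :: "'v set" and EG :: "'e set" and endsG :: "'e \<Rightarrow> 'v set" and u :: 'v
  assumes "k \<ge> 1"
    and "multigraph VH EH endsH" "connected_graph VH EH endsH"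
    and "regular k VH EH endsH" "edge_colorable k EH endsH"
    and "simple_graph VG EG endsG" "connected_graph VG EG endsG" "regular k VG EG endsG"
    and "u \<in> VG"
    and "\<forall>x\<in>VH. \<forall>\<sigma>. bij_betw \<sigma> (inc_edges EG endsG u) (inc_edges EH endsH x) \<longrightarrow>
           (\<exists>fV fE. covering_projection VG EG endsG VH EH endsH fV fE \<and> fV u = x \<and>
              (\<forall>e\<in>inc_edges EG endsG u. fE e = \<sigma> e))"
  shows "(\<forall>x\<in>VH. \<forall>\<sigma>. bij_betw \<sigma> (inc_edges EG endsG u) (inc_edges EH endsH x) \<longrightarrow>
           (\<exists>fV fE. partial_covering_projection (split_V VG EG endsG u) EG (split_ends endsG u)
                       VH EH endsH fV fE \<and>
              (\<forall>e\<in>inc_edges EG endsG u. fE e = \<sigma> e \<and> fV (Inr e) = x)))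
       \<and> (\<forall>fV fE. partial_covering_projection (split_V VG EG endsG u) EG (split_ends endsG u)
                       VH EH endsH fV fE \<longrightarrow>
            (\<forall>e1\<in>inc_edges EG endsG u. \<forall>e2\<in>inc_edges EG endsG u. fV (Inr e1) = fV (Inr e2)))
       \<and> (\<forall>fV fE. partial_covering_projection (split_V VG EG endsG u) EG (split_ends endsG u)
                       VH EH endsH fV fE \<longrightarrow>
            inj_on fE (inc_edges EG endsG u) \<and>
            (\<forall>e\<in>inc_edges EG endsG u. fV (Inr e) \<in> endsH (fE e)))"
proof -
  have mgG: "multigraph VG EG endsG" using assms(6) unfolding simple_graph_def by simp
  have cardP: "card (inc_edges EG endsG u) = k" using assms(8,9) unfolding regular_def by auto
  have Pne: "inc_edges EG endsG u \<noteq> {}" using cardP assms(1) by auto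
  have finP: "finite (inc_edges EG endsG u)" using mgG unfolding multigraph_def inc_edges_def by auto
  have A: "\<forall>x\<in>VH. \<forall>\<sigma>. bij_betw \<sigma> (inc_edges EG endsG u) (inc_edges EH endsH x) \<longrightarrow>
           (\<exists>fV fE. partial_covering_projection (split_V VG EG endsG u) EG (split_ends endsG u)
                       VH EH endsH fV fE \<and>
              (\<forall>e\<in>inc_edges EG endsG u. fE e = \<sigma> e \<and> fV (Inr e) = x))"
  proof (intro ballI allI impI)
    fix x \<sigma> assume x: "x \<in> VH" and bij: "bij_betw \<sigma> (inc_edges EG endsG u) (inc_edges EH endsH x)"
    obtain fV fE where cv: "covering_projection VG EG endsG VH EH endsH fV fE" "fV u = x"
      "\<forall>e\<in>inc_edges EG endsG u. fE e = \<sigma> e" using assms(10) x bij by blast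
    have "partial_covering_projection (split_V VG EG endsG u) EG (split_ends endsG u) VH EH endsH
           (\<lambda>z. fV (case z of Inl v \<Rightarrow> v | Inr e \<Rightarrow> u)) fE"
      by (rule parta[OF assms(3,2) mgG assms(9) Pne cv(1)])
    moreover have "\<forall>e\<in>inc_edges EG endsG u. fE e = \<sigma> e \<and> (\<lambda>z. fV (case z of Inl v \<Rightarrow> v | Inr e \<Rightarrow> u)) (Inr e) = x"
      using cv(2,3) by simp
    ultimately show "\<exists>fV fE. partial_covering_projection (split_V VG EG endsG u) EG (split_ends endsG u)
                       VH EH endsH fV fE \<and>
              (\<forall>e\<in>inc_edges EG endsG u. fE e = \<sigma> e \<and> fV (Inr e) = x)" by blast
  qed
  have BC: "(\<forall>e1\<in>inc_edges EG endsG u. \<forall>e2\<in>inc_edges EG endsG u. fV (Inr e1) = fV (Inr e2)) \<and>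
            (inj_on fE (inc_edges EG endsG u) \<and>
            (\<forall>e\<in>inc_edges EG endsG u. fV (Inr e) \<in> endsH (fE e)))"
    if pcp: "partial_covering_projection (split_V VG EG endsG u) EG (split_ends endsG u) VH EH endsH fV fE"
    for fV fE
  proof -
    obtain c :: "'f \<Rightarrow> nat" where c1: "\<forall>e\<in>EH. c e < k"
      and c2: "\<forall>e1\<in>EH. \<forall>e2\<in>EH. e1 \<noteq> e2 \<and> endsH e1 \<inter> endsH e2 \<noteq> {} \<longrightarrow> c e1 \<noteq> c e2"
      using assms(5) unfolding edge_colorable_def by blast
    obtain e0 where e0: "e0 \<in> inc_edges EG endsG u" using Pne by blast
    then have "Inr e0 \<in> split_V VG EG endsG u" unfolding split_V_def by auto
    then have "fV (Inr e0) \<in> VH" using pcp unfolding partial_covering_projection_def graph_hom_def by auto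
    then obtain x where x: "x \<in> VH" by blast
    have cx: "card (inc_edges EH endsH x) = k" using assms(4) x unfolding regular_def by auto
    have fx: "finite (inc_edges EH endsH x)" using assms(2) unfolding multigraph_def inc_edges_def by auto
    obtain \<sigma> where \<sigma>: "bij_betw \<sigma> (inc_edges EG endsG u) (inc_edges EH endsH x)"
      using finite_same_card_bij[OF finP fx] cardP cx by auto
    obtain gV gE where cv: "covering_projection VG EG endsG VH EH endsH gV gE"
      using assms(10) x \<sigma> by blast
    interpret pc k VH EH endsH VG EG endsG u c fV fE gV gE
      by (unfold_locales) (fact assms(1), fact assms(2), fact assms(3), fact assms(4), fact c1, fact c2,
          fact assms(6), fact assms(8), fact assms(9), fact cv, fact pcp)
    have "\<forall>e\<in>inc_edges EG endsG u. fV (Inr e) \<in> endsH (fE e)"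
    proof
      fix e assume e: "e \<in> inc_edges EG endsG u"
      show "fV (Inr e) \<in> endsH (fE e)" using fends[of e] Inr_SE[OF e] Pin[OF e] by simp
    qed
    then show ?thesis using partb injP by blast
  qed
  show ?thesis using A BC by blast
qed


end
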